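(* Let $p$ be an odd prime, $\gamma\ge1$, $0\le\rho\le\gamma$, and \[G=\langle a,b:[a,b]^{p^\gamma}=[a,b,a]=[a,b,b]=1,\ a^{p^\gamma}=[a,b]^{p^\rho},\ b^{p^\gamma}=1\rangle.\] Let $1\le\delta\le\gamma$. Then (1) $\langle a^{p^\delta},b^{p^\delta},[a,b]\rangle/\langle[a,b]^{p^\delta}\rangle\cong C_{p^{\gamma-\rho}}\times C_{p^{\gamma-\delta}}\times C_{p^\rho}$ if $\rho<\delta<\gamma-\rho$, and $\cong C_{p^{\gamma-\delta}}\times C_{p^{\gamma-\delta}}\times C_{p^\delta}$ otherwise; (2) $\langle a^{p^\delta},b^{p^\delta},[a,b]\rangle/\langle[a,b]^{p^{\delta-1}}\rangle\cong C_{p^{\gamma-\rho-1}}\times C_{p^{\gamma-\delta}}\times C_{p^\rho}$ if $\rho<\delta<\gamma-\rho$, and $\cong C_{p^{\gamma-\delta}}\times C_{p^{\gamma-\delta}}\times C_{p^{\delta-1}}$ otherwise.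
   Context: $[g,h]=g^{-1}h^{-1}gh$, $[x,y,z]=[[x,y],z]$; $C_m$ is the cyclic group of order $m$. (This group is the two-generator $p$-group of class 2 and order $p^{3\gamma}$ with parameters $(\alpha,\beta,\gamma;\rho,\sigma)=(\gamma,\gamma,\gamma;\rho,\gamma)$.) *)

theory Defs
  imports "HOL-Algebra.Algebra"
begin

definition commutator :: "('a, 'b) monoid_scheme \<Rightarrow> 'a \<Rightarrow> 'a \<Rightarrow> 'a" where
  "commutator G g h = inv\<^bsub>G\<^esub> g \<otimes>\<^bsub>G\<^esub> inv\<^bsub>G\<^esub> h \<otimes>\<^bsub>G\<^esub> g \<otimes>\<^bsub>G\<^esub> h"

abbreviation cyc :: "nat \<Rightarrow> int monoid" where
  "cyc m \<equiv> integer_mod_group m"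

text \<open>G is the group presented by generators a, b and the relations of the paper:
  G is generated by a, b, the relations hold, and G has order p^(3 gamma)
  (the order of the presented group, as stated in the paper); a group generated by
  two elements satisfying the relations is a quotient of the presented group, so the
  order condition pins G down up to isomorphism.\<close>
definition presented_G :: "('a, 'b) monoid_scheme \<Rightarrow> nat \<Rightarrow> nat \<Rightarrow> nat \<Rightarrow> 'a \<Rightarrow> 'a \<Rightarrow> bool" where
  "presented_G G p \<gamma> \<rho> a b \<longleftrightarrow>
     group G \<and> a \<in> carrier G \<and> b \<in> carrier G \<and>
     generate G {a, b} = carrier G \<and>
     commutator G a b [^]\<^bsub>G\<^esub> (p ^ \<gamma>) = \<one>\<^bsub>G\<^esub> \<and>
     commutator G (commutator G a b) a = \<one>\<^bsub>G\<^esub> \<and>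
     commutator G (commutator G a b) b = \<one>\<^bsub>G\<^esub> \<and>
     a [^]\<^bsub>G\<^esub> (p ^ \<gamma>) = commutator G a b [^]\<^bsub>G\<^esub> (p ^ \<rho>) \<and>
     b [^]\<^bsub>G\<^esub> (p ^ \<gamma>) = \<one>\<^bsub>G\<^esub> \<and>
     finite (carrier G) \<and> card (carrier G) = p ^ (3 * \<gamma>)"

end

theory Submission
  imports Defs
begin



lemma mod_dvd_eq_int:
  fixes u u' n :: int
  assumes "0 \<le> u" "u < n" "0 \<le> u'" "u' < n" "n dvd u - u'"
  shows "u = u'"
proof -
  have "u mod n = u' mod n" using assms(5) by (simp add: mod_eq_dvd_iff)
  then show ?thesis using assms by simp
qed

lemma iso_from_Z3:
  fixes Q :: "('c, 'd) monoid_scheme" and \<phi> :: "int \<Rightarrow> int \<Rightarrow> int \<Rightarrow> 'c" and n1 n2 n3 :: nat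
  assumes Q: "group Q" and n: "n1 > 0" "n2 > 0" "n3 > 0"
    and car: "\<And>u v w. \<phi> u v w \<in> carrier Q"
    and add: "\<And>u v w u' v' w'. \<phi> (u + u') (v + v') (w + w') = \<phi> u v w \<otimes>\<^bsub>Q\<^esub> \<phi> u' v' w'"
    and ker: "\<And>u v w. \<phi> u v w = \<one>\<^bsub>Q\<^esub> \<longleftrightarrow> int n1 dvd u \<and> int n2 dvd v \<and> int n3 dvd w"
    and sur: "carrier Q \<subseteq> {\<phi> u v w | u v w. True}"
  shows "Q \<cong> cyc n1 \<times>\<times> (cyc n2 \<times>\<times> cyc n3)"
proof -
  interpret Q: group Q by (rule Q)
  let ?T = "cyc n1 \<times>\<times> (cyc n2 \<times>\<times> cyc n3)"
  have T: "group ?T" by (intro DirProd_group group_integer_mod_group)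
  have split: "\<phi> u v w = \<phi> u' v' w' \<otimes>\<^bsub>Q\<^esub> \<phi> (u - u') (v - v') (w - w')" for u v w u' v' w'
    using add[of u' "u - u'" v' "v - v'" w' "w - w'"] by simp
  have eqv: "\<phi> u v w = \<phi> u' v' w'"
    if "int n1 dvd u - u'" "int n2 dvd v - v'" "int n3 dvd w - w'" for u v w u' v' w'
    using split[of u v w u' v' w'] ker[of "u - u'" "v - v'" "w - w'"] that car by simp
  have inj: "int n1 dvd u - u' \<and> int n2 dvd v - v' \<and> int n3 dvd w - w'"
    if "\<phi> u v w = \<phi> u' v' w'" for u v w u' v' w'
  proof -
    have "\<phi> u' v' w' \<otimes>\<^bsub>Q\<^esub> \<phi> (u - u') (v - v') (w - w') = \<phi> u' v' w'"
      using split[of u v w u' v' w'] that by simp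
    then have "\<phi> (u - u') (v - v') (w - w') = \<one>\<^bsub>Q\<^esub>" using car by simp
    then show ?thesis using ker by blast
  qed
  let ?psi = "\<lambda>(u, v, w). \<phi> u v w"
  have cT: "carrier ?T = {0..<int n1} \<times> {0..<int n2} \<times> {0..<int n3}"
    using n by (simp add: carrier_integer_mod_group)
  have hom: "?psi \<in> hom ?T Q"
  proof (rule homI)
    fix x assume "x \<in> carrier ?T" then show "?psi x \<in> carrier Q" using car by auto
  next
    fix x y assume "x \<in> carrier ?T" "y \<in> carrier ?T"
    obtain u v w where x: "x = (u, v, w)" by (cases x) auto
    obtain u' v' w' where y: "y = (u', v', w')" by (cases y) auto
    have "x \<otimes>\<^bsub>?T\<^esub> y = ((u + u') mod n1, (v + v') mod n2, (w + w') mod n3)"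
      using x y by simp
    then have "?psi (x \<otimes>\<^bsub>?T\<^esub> y) = \<phi> ((u + u') mod n1) ((v + v') mod n2) ((w + w') mod n3)" by simp
    also have "\<dots> = \<phi> (u + u') (v + v') (w + w')"
      by (rule eqv) (simp_all add: mod_eq_dvd_iff[symmetric])
    also have "\<dots> = ?psi x \<otimes>\<^bsub>Q\<^esub> ?psi y" using x y add by simp
    finally show "?psi (x \<otimes>\<^bsub>?T\<^esub> y) = ?psi x \<otimes>\<^bsub>Q\<^esub> ?psi y" .
  qed
  have bij: "bij_betw ?psi (carrier ?T) (carrier Q)"
  proof (rule bij_betwI')
    fix x y assume "x \<in> carrier ?T" "y \<in> carrier ?T"
    then obtain u v w u' v' w' where x: "x = (u, v, w)" and y: "y = (u', v', w')"
      and r: "0 \<le> u" "u < n1" "0 \<le> v" "v < n2" "0 \<le> w" "w < n3"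
         "0 \<le> u'" "u' < n1" "0 \<le> v'" "v' < n2" "0 \<le> w'" "w' < n3"
      using cT by auto
    show "(?psi x = ?psi y) = (x = y)"
    proof
      assume "?psi x = ?psi y"
      then have "\<phi> u v w = \<phi> u' v' w'" using x y by simp
      then have d: "int n1 dvd u - u' \<and> int n2 dvd v - v' \<and> int n3 dvd w - w'" by (rule inj)
      then show "x = y" using x y r mod_dvd_eq_int by metis
    qed simp
  next
    fix x assume "x \<in> carrier ?T" then show "?psi x \<in> carrier Q" using car by auto
  next
    fix q assume "q \<in> carrier Q"
    then obtain u v w where q: "q = \<phi> u v w" using sur by blast
    have "q = ?psi (u mod n1, v mod n2, w mod n3)"
      unfolding q by simp (rule eqv; simp add: mod_eq_dvd_iff[symmetric])
    moreover have "(u mod n1, v mod n2, w mod n3) \<in> carrier ?T" using cT n by simp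
    ultimately show "\<exists>x\<in>carrier ?T. q = ?psi x" by blast
  qed
  have "?T \<cong> Q" using hom bij unfolding is_iso_def iso_def by blast
  then show ?thesis using group.iso_sym[OF T] by blast
qed




lemma arithI:
  fixes p u v w :: int and \<gamma> \<delta> \<rho> d :: nat
  assumes p: "p > 0" and h: "\<rho> \<le> d" "d \<le> \<delta>" "\<delta> + \<rho> < \<gamma>"
  defines "x \<equiv> u + p ^ (\<gamma> - \<delta> - \<rho>) * w"
  shows "(p ^ \<gamma> dvd p ^ \<delta> * x \<and> p ^ \<gamma> dvd p ^ \<delta> * v \<and>
          p ^ d dvd (- w + p ^ \<rho> * ((p ^ \<delta> * x) div p ^ \<gamma>)))
     \<longleftrightarrow> (p ^ (\<gamma> - \<delta> + d - \<rho>) dvd u \<and> p ^ (\<gamma> - \<delta>) dvd v \<and> p ^ \<rho> dvd w)"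
proof -
  define M where "M = p ^ (\<gamma> - \<delta>)"
  define P where "P = p ^ \<delta>"
  define R where "R = p ^ \<rho>"
  define S where "S = p ^ (d - \<rho>)"
  define e where "e = p ^ (\<gamma> - \<delta> - \<rho>)"
  have P0: "P \<noteq> 0" and R0: "R \<noteq> 0" and M0: "M \<noteq> 0" using p by (auto simp: P_def R_def M_def)
  have N: "p ^ \<gamma> = P * M" using h by (simp add: P_def M_def power_add[symmetric])
  have D: "p ^ d = R * S" using h by (simp add: R_def S_def power_add[symmetric])
  have eR: "e * R = M" using h by (simp add: e_def R_def M_def power_add[symmetric])
  have MS: "p ^ (\<gamma> - \<delta> + d - \<rho>) = M * S" using h by (simp add: S_def M_def power_add[symmetric])
  have c1: "p ^ \<gamma> dvd p ^ \<delta> * y \<longleftrightarrow> M dvd y" for y using N P0 by (simp add: P_def[symmetric])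
  have c2: "(p ^ \<delta> * y) div p ^ \<gamma> = y div M" for y using N P0 by (simp add: P_def[symmetric])
  have x: "x = u + e * w" by (simp add: x_def e_def)
  show ?thesis
    unfolding c1 c2 D MS R_def[symmetric] M_def[symmetric]
  proof
    assume a: "M dvd x \<and> M dvd v \<and> R * S dvd - w + R * (x div M)"
    then obtain t where t: "x = M * t" by blast
    then have xt: "x div M = t" using M0 by simp
    have "R dvd - w + R * t" using a xt by (meson dvd_mult_left)
    then have "R dvd w" by (metis dvd_add_left_iff dvd_minus_iff dvd_triv_left add.commute)
    then obtain s where s: "w = R * s" by blast
    have "R * S dvd R * (t - s)" using a xt s by (simp add: algebra_simps)
    then have "S dvd t - s" using R0 by simp
    moreover have "u = M * (t - s)" using x t s eR by (simp add: algebra_simps)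
    ultimately have "M * S dvd u" by simp
    then show "M * S dvd u \<and> M dvd v \<and> R dvd w" using a \<open>R dvd w\<close> by blast
  next
    assume a: "M * S dvd u \<and> M dvd v \<and> R dvd w"
    then obtain r s where r: "u = M * S * r" and s: "w = R * s" by blast
    have xe: "x = M * (S * r + s)" using x r s eR by (simp add: algebra_simps)
    then have "x div M = S * r + s" using M0 by simp
    then have "- w + R * (x div M) = R * S * r" using s by (simp add: algebra_simps)
    then show "M dvd x \<and> M dvd v \<and> R * S dvd - w + R * (x div M)" using a xe by simp
  qed
qed

lemma arithII:
  fixes p u v w :: int and \<gamma> \<delta> \<rho> d :: nat
  assumes p: "p > 0" and h: "d \<le> \<delta>" "\<delta> \<le> \<gamma>" "d \<le> \<rho> \<or> \<gamma> - \<delta> \<le> \<rho>"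
  defines "f \<equiv> (if \<gamma> - \<delta> \<le> \<rho> then p ^ (\<rho> - (\<gamma> - \<delta>)) else 0)"
  shows "(p ^ \<gamma> dvd p ^ \<delta> * u \<and> p ^ \<gamma> dvd p ^ \<delta> * v \<and>
          p ^ d dvd (w - f * u + p ^ \<rho> * ((p ^ \<delta> * u) div p ^ \<gamma>)))
     \<longleftrightarrow> (p ^ (\<gamma> - \<delta>) dvd u \<and> p ^ (\<gamma> - \<delta>) dvd v \<and> p ^ d dvd w)"
proof -
  define M where "M = p ^ (\<gamma> - \<delta>)"
  define P where "P = p ^ \<delta>"
  have P0: "P \<noteq> 0" and M0: "M \<noteq> 0" using p by (auto simp: P_def M_def)
  have N: "p ^ \<gamma> = P * M" using h by (simp add: P_def M_def power_add[symmetric])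
  have c1: "p ^ \<gamma> dvd p ^ \<delta> * y \<longleftrightarrow> M dvd y" for y using N P0 by (simp add: P_def[symmetric])
  have c2: "(p ^ \<delta> * y) div p ^ \<gamma> = y div M" for y using N P0 by (simp add: P_def[symmetric])
  have key: "p ^ d dvd (w - f * (M * t) + p ^ \<rho> * t) \<longleftrightarrow> p ^ d dvd w" for t
  proof (cases "\<gamma> - \<delta> \<le> \<rho>")
    case True
    then have "f * M = p ^ \<rho>" by (simp add: f_def M_def power_add[symmetric])
    then have "w - f * (M * t) + p ^ \<rho> * t = w" 
    proof -
      have "w - f * (M * t) + p ^ \<rho> * t = w - (f * M) * t + p ^ \<rho> * t" by (simp add: mult.assoc)
      also have "\<dots> = w" using \<open>f * M = p ^ \<rho>\<close> by simp
      finally show ?thesis .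
    qed
    then show ?thesis by (simp only:)
  next
    case False
    then have "d \<le> \<rho>" using h by auto
    then have "p ^ d dvd p ^ \<rho> * t" by (simp add: le_imp_power_dvd)
    then show ?thesis using False by (simp add: f_def dvd_add_left_iff)
  qed
  show ?thesis
    unfolding c1 c2 M_def[symmetric]
  proof
    assume a: "M dvd u \<and> M dvd v \<and> p ^ d dvd w - f * u + p ^ \<rho> * (u div M)"
    then obtain t where t: "u = M * t" by blast
    then show "M dvd u \<and> M dvd v \<and> p ^ d dvd w" using a key M0 by simp
  next
    assume a: "M dvd u \<and> M dvd v \<and> p ^ d dvd w"
    then obtain t where t: "u = M * t" by blast
    then show "M dvd u \<and> M dvd v \<and> p ^ d dvd w - f * u + p ^ \<rho> * (u div M)" using a key M0 by simp
  qed
qed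




lemma (in group) inv_cancel_left1 [simp]:
  "x \<in> carrier G \<Longrightarrow> y \<in> carrier G \<Longrightarrow> inv x \<otimes> (x \<otimes> y) = y"
  by (simp add: m_assoc[symmetric])

lemma (in group) inv_cancel_left2 [simp]:
  "x \<in> carrier G \<Longrightarrow> y \<in> carrier G \<Longrightarrow> x \<otimes> (inv x \<otimes> y) = y"
  by (simp add: m_assoc[symmetric])

lemma (in group) conj_hom:
  assumes "g \<in> carrier G"
  shows "(\<lambda>u. g \<otimes> u \<otimes> inv g) \<in> hom G G"
  by (rule homI) (auto simp: assms m_assoc)

lemma (in group) comm_int_pow:
  assumes x: "x \<in> carrier G" and y: "y \<in> carrier G" and xy: "x \<otimes> y = y \<otimes> x"
  shows "x \<otimes> y [^] (j::int) = y [^] j \<otimes> x"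
proof -
  have "(\<lambda>u. x \<otimes> u \<otimes> inv x) (y [^] j) = ((\<lambda>u. x \<otimes> u \<otimes> inv x) y) [^] j"
    using hom_int_pow[OF conj_hom[OF x] y is_group is_group] .
  moreover have "x \<otimes> y \<otimes> inv x = y" using xy x y by (simp add: m_assoc)
  ultimately have "x \<otimes> y [^] j \<otimes> inv x = y [^] j" by simp
  then show ?thesis using x y by (metis inv_solve_right int_pow_closed m_closed)
qed

lemma (in group) comm_int_pow2:
  assumes x: "x \<in> carrier G" and y: "y \<in> carrier G" and xy: "x \<otimes> y = y \<otimes> x"
  shows "x [^] (i::int) \<otimes> y [^] (j::int) = y [^] j \<otimes> x [^] i"
proof -
  have "y [^] j \<otimes> x = x \<otimes> y [^] j" using comm_int_pow[OF x y xy] by simp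
  then show ?thesis using comm_int_pow[of "y [^] j" x i] x y by simp
qed

lemma (in group) twisted_int_pow:
  assumes x: "x \<in> carrier G" and y: "y \<in> carrier G" and z: "z \<in> carrier G"
    and xy: "x \<otimes> y = y \<otimes> x \<otimes> z" and zx: "z \<otimes> x = x \<otimes> z" and zy: "z \<otimes> y = y \<otimes> z"
  shows "x [^] (i::int) \<otimes> y [^] (j::int) = y [^] j \<otimes> x [^] i \<otimes> z [^] (i * j)"
proof -
  have h1: "(\<lambda>u. x \<otimes> u \<otimes> inv x) (y [^] j) = ((\<lambda>u. x \<otimes> u \<otimes> inv x) y) [^] j"
    using hom_int_pow[OF conj_hom[OF x] y is_group is_group] .
  have "x \<otimes> y \<otimes> inv x = y \<otimes> z"
    using xy zx x y z by (metis inv_solve_right m_assoc m_closed)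
  with h1 have "x \<otimes> y [^] j \<otimes> inv x = (y \<otimes> z) [^] j" by simp
  also have "\<dots> = y [^] j \<otimes> z [^] j" using int_pow_mult_distrib[OF zy[symmetric] y z] .
  finally have "x \<otimes> y [^] j = y [^] j \<otimes> z [^] j \<otimes> x"
    using x y z by (metis inv_solve_right int_pow_closed m_closed)
  also have "\<dots> = y [^] j \<otimes> x \<otimes> z [^] j"
    using comm_int_pow[OF x z zx[symmetric], of j] x y z by (simp add: m_assoc)
  finally have e1: "x \<otimes> y [^] j = y [^] j \<otimes> x \<otimes> z [^] j" .
  define Y where "Y = y [^] j"
  define Z where "Z = z [^] j"
  have Y: "Y \<in> carrier G" and Z: "Z \<in> carrier G" using y z by (auto simp: Y_def Z_def)
  have e1': "x \<otimes> Y = Y \<otimes> (x \<otimes> Z)" using e1 Y Z x by (simp add: Y_def Z_def m_assoc)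
  have "inv Y \<otimes> x \<otimes> Y = x \<otimes> Z" using e1' Y Z x
    by (simp add: m_assoc)
  have h2: "(\<lambda>u. inv Y \<otimes> u \<otimes> inv (inv Y)) (x [^] i) = ((\<lambda>u. inv Y \<otimes> u \<otimes> inv (inv Y)) x) [^] i"
    using hom_int_pow[OF conj_hom[of "inv Y"] x is_group is_group] Y by simp
  have xZ: "x \<otimes> Z = Z \<otimes> x" using comm_int_pow[OF x z zx[symmetric], of j] by (simp add: Z_def)
  from h2 have "inv Y \<otimes> x [^] i \<otimes> Y = (x \<otimes> Z) [^] i"
    using Y \<open>inv Y \<otimes> x \<otimes> Y = x \<otimes> Z\<close> by simp
  also have "\<dots> = x [^] i \<otimes> Z [^] i" using int_pow_mult_distrib[OF xZ x Z] .
  also have "Z [^] i = z [^] (i * j)" using z by (simp add: Z_def int_pow_pow mult.commute)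
  finally have "inv Y \<otimes> x [^] i \<otimes> Y = x [^] i \<otimes> z [^] (i * j)" .
  then have "x [^] i \<otimes> Y = Y \<otimes> (x [^] i \<otimes> z [^] (i * j))"
    using x Y z by (metis inv_solve_left int_pow_closed m_closed m_assoc inv_closed)
  then show ?thesis using x Y z by (simp add: Y_def m_assoc)
qed


lemma (in group) comm_of_commutator:
  assumes x: "x \<in> carrier G" and y: "y \<in> carrier G" and h: "commutator G x y = \<one>"
  shows "x \<otimes> y = y \<otimes> x"
proof -
  have "inv x \<otimes> (inv y \<otimes> (x \<otimes> y)) = \<one>" using h x y by (simp add: commutator_def m_assoc)
  then have "inv y \<otimes> (x \<otimes> y) = x" using x y
    by (metis inv_solve_left' m_closed one_closed r_one inv_closed)
  then show ?thesis using x y by (metis inv_solve_left' m_closed)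
qed

lemma (in group) shuffle6:
  assumes c: "A \<in> carrier G" "B \<in> carrier G" "C \<in> carrier G" "A' \<in> carrier G" "B' \<in> carrier G"
    "C' \<in> carrier G" "T \<in> carrier G"
    and r1: "C \<otimes> A' = A' \<otimes> C" and r2: "B \<otimes> A' = A' \<otimes> B \<otimes> T"
    and r3: "C \<otimes> B' = B' \<otimes> C" and r4: "T \<otimes> B' = B' \<otimes> T"
  shows "(A \<otimes> B \<otimes> C) \<otimes> (A' \<otimes> B' \<otimes> C') = (A \<otimes> A') \<otimes> (B \<otimes> B') \<otimes> (T \<otimes> C \<otimes> C')"
proof -
  have s1: "C \<otimes> (A' \<otimes> w) = A' \<otimes> (C \<otimes> w)" if "w \<in> carrier G" for w
    using r1 c that by (metis m_assoc)
  have s2: "B \<otimes> (A' \<otimes> w) = A' \<otimes> (B \<otimes> (T \<otimes> w))" if "w \<in> carrier G" for w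
    using r2 c that by (metis m_assoc m_closed)
  have s3: "C \<otimes> (B' \<otimes> w) = B' \<otimes> (C \<otimes> w)" if "w \<in> carrier G" for w
    using r3 c that by (metis m_assoc)
  have s4: "T \<otimes> (B' \<otimes> w) = B' \<otimes> (T \<otimes> w)" if "w \<in> carrier G" for w
    using r4 c that by (metis m_assoc)
  show ?thesis using c by (simp add: m_assoc s1 s2 s3 s4)
qed

locale pres = group G for G (structure) +
  fixes p \<gamma> \<rho> :: nat and a b :: 'a
  assumes pres: "presented_G G p \<gamma> \<rho> a b" and p_prime: "Factorial_Ring.prime p" and rho_le: "\<rho> \<le> \<gamma>"
begin

abbreviation "cm \<equiv> commutator G a b"
abbreviation "NN \<equiv> int (p ^ \<gamma>)"
abbreviation "RR \<equiv> int (p ^ \<rho>)"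

lemma a_c [simp]: "a \<in> carrier G" and b_c [simp]: "b \<in> carrier G"
  using pres by (auto simp: presented_G_def)

lemma cm_c [simp]: "cm \<in> carrier G"
  by (simp add: commutator_def)

lemma gen: "generate G {a, b} = carrier G"
  and cN: "cm [^] (p ^ \<gamma>) = \<one>"
  and aN: "a [^] (p ^ \<gamma>) = cm [^] (p ^ \<rho>)"
  and bN: "b [^] (p ^ \<gamma>) = \<one>"
  and fin: "finite (carrier G)" and card: "card (carrier G) = p ^ (3 * \<gamma>)"
  using pres by (auto simp: presented_G_def)

lemma cm_a: "cm \<otimes> a = a \<otimes> cm" and cm_b: "cm \<otimes> b = b \<otimes> cm"
  using pres comm_of_commutator by (auto simp: presented_G_def)

lemma ab: "a \<otimes> b = b \<otimes> a \<otimes> cm"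
  by (simp add: commutator_def m_assoc)

lemma ba: "b \<otimes> a = a \<otimes> b \<otimes> inv cm"
  using ab by (simp add: inv_solve_right)

lemma invcm_a: "inv cm \<otimes> a = a \<otimes> inv cm" and invcm_b: "inv cm \<otimes> b = b \<otimes> inv cm"
  using comm_int_pow[OF a_c cm_c cm_a[symmetric], of "-1"] comm_int_pow[OF b_c cm_c cm_b[symmetric], of "-1"]
  by (simp_all add: int_pow_neg)

lemma ba_pow: "b [^] (j::int) \<otimes> a [^] (i::int) = a [^] i \<otimes> b [^] j \<otimes> cm [^] (-(i*j))"
proof -
  have "b [^] j \<otimes> a [^] i = a [^] i \<otimes> b [^] j \<otimes> (inv cm) [^] (j * i)"
    by (rule twisted_int_pow) (auto simp: ba invcm_a invcm_b)
  also have "(inv cm) [^] (j * i) = cm [^] (-(i*j))"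
    by (simp add: int_pow_inv int_pow_neg mult.commute)
  finally show ?thesis .
qed

lemma cpow_a: "cm [^] (k::int) \<otimes> a [^] (i::int) = a [^] i \<otimes> cm [^] k"
  by (rule comm_int_pow2) (auto simp: cm_a)
lemma cpow_b: "cm [^] (k::int) \<otimes> b [^] (i::int) = b [^] i \<otimes> cm [^] k"
  by (rule comm_int_pow2) (auto simp: cm_b)

definition E :: "int \<Rightarrow> int \<Rightarrow> int \<Rightarrow> 'a" where
  "E i j k = a [^] i \<otimes> b [^] j \<otimes> cm [^] k"

lemma E_c [simp]: "E i j k \<in> carrier G"
  by (simp add: E_def)

lemma E_mult: "E i j k \<otimes> E i' j' k' = E (i + i') (j + j') (k + k' - j * i')"
proof -
  have "E i j k \<otimes> E i' j' k' = (a [^] i \<otimes> a [^] i') \<otimes> (b [^] j \<otimes> b [^] j') \<otimes>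
     (cm [^] (-(i'*j)) \<otimes> cm [^] k \<otimes> cm [^] k')"
    unfolding E_def
    by (rule shuffle6) (auto simp: cpow_a cpow_b ba_pow comm_int_pow2)
  also have "\<dots> = E (i + i') (j + j') (k + k' - j * i')"
    by (simp add: E_def int_pow_mult[symmetric] algebra_simps)
  finally show ?thesis .
qed

lemma E_000 [simp]: "E 0 0 0 = \<one>" by (simp add: E_def)
lemma E_00k: "E 0 0 k = cm [^] k" by (simp add: E_def)


lemma p_pos: "p > 0" using p_prime by (simp add: prime_gt_0_nat)
lemma NN_pos: "NN > 0" using p_pos by simp
lemma RR_pos: "RR > 0" using p_pos by simp

lemma pow_mod:
  assumes x: "x \<in> carrier G" and h: "x [^] (n::int) = \<one>"
  shows "x [^] (i::int) = x [^] (i mod n)"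
proof -
  have "x [^] i = x [^] (n * (i div n) + i mod n)" by simp
  also have "\<dots> = x [^] (n * (i div n)) \<otimes> x [^] (i mod n)"
    using int_pow_mult[OF x] by blast
  also have "x [^] (n * (i div n)) = (x [^] n) [^] (i div n)"
    using int_pow_pow[OF x] by metis
  finally show ?thesis using x h by simp
qed

lemma aN_int: "a [^] NN = cm [^] RR" by (metis int_pow_int aN)
lemma bN_int: "b [^] NN = \<one>" by (metis int_pow_int bN)
lemma cN_int: "cm [^] NN = \<one>" by (metis int_pow_int cN)

lemma E_red_a: "E i j k = E (i mod NN) j (k + RR * (i div NN))"
proof -
  have "E (NN * (i div NN)) 0 0 = a [^] (NN * (i div NN))" by (simp add: E_def)
  also have "\<dots> = (a [^] NN) [^] (i div NN)" by (metis int_pow_pow a_c)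
  also have "\<dots> = (cm [^] RR) [^] (i div NN)" by (simp only: aN_int)
  also have "\<dots> = E 0 0 (RR * (i div NN))" by (metis int_pow_pow cm_c E_00k)
  finally have e: "E (NN * (i div NN)) 0 0 = E 0 0 (RR * (i div NN))" .
  have "E i j k = E (NN * (i div NN)) 0 0 \<otimes> E (i mod NN) j k"
    by (simp add: E_mult)
  also have "\<dots> = E 0 0 (RR * (i div NN)) \<otimes> E (i mod NN) j k"
    by (simp only: e)
  also have "\<dots> = E (i mod NN) j (k + RR * (i div NN))" by (simp add: E_mult add.commute)
  finally show ?thesis .
qed

lemma E_red_b: "E i j k = E i (j mod NN) k"
  unfolding E_def using pow_mod[OF b_c bN_int] by metis

lemma E_red_c: "E i j k = E i j (k mod NN)"
  unfolding E_def using pow_mod[OF cm_c cN_int] by metis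

lemma E_red: "E i j k = E (i mod NN) (j mod NN) ((k + RR * (i div NN)) mod NN)"
  using E_red_a E_red_b E_red_c by metis

lemma gen_sub: "carrier G \<subseteq> {E i j k | i j k. True}"
proof
  fix g assume "g \<in> carrier G"
  then have "g \<in> generate G {a, b}" using gen by simp
  then show "g \<in> {E i j k | i j k. True}"
  proof (induction rule: generate.induct)
    case one
    then show ?case by (metis (mono_tags, lifting) E_000 mem_Collect_eq)
  next
    case (incl h)
    then show ?case
    proof
      assume "h = a" then have "h = E 1 0 0" by (simp add: E_def)
      then show ?thesis by blast
    next
      assume "h \<in> {b}" then have "h = E 0 1 0" by (simp add: E_def)
      then show ?thesis by blast
    qed
  next
    case (inv h)
    then show ?case
    proof
      assume "h = a" then have "inv h = E (-1) 0 0" by (simp add: E_def int_pow_neg)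
      then show ?thesis by blast
    next
      assume "h \<in> {b}" then have "inv h = E 0 (-1) 0" by (simp add: E_def int_pow_neg)
      then show ?thesis by blast
    qed
  next
    case (eng h1 h2)
    then show ?case using E_mult by blast
  qed
qed

definition Box :: "(int \<times> int \<times> int) set" where
  "Box = {0..<NN} \<times> {0..<NN} \<times> {0..<NN}"

abbreviation "Ef \<equiv> (\<lambda>(i, j, k). E i j k)"

lemma carrier_Box: "carrier G = Ef ` Box"
proof
  show "carrier G \<subseteq> Ef ` Box"
  proof
    fix g assume "g \<in> carrier G"
    then obtain i j k where g: "g = E i j k" using gen_sub by blast
    have "(i mod NN, j mod NN, (k + RR * (i div NN)) mod NN) \<in> Box"
      using NN_pos by (simp add: Box_def)
    then show "g \<in> Ef ` Box" using g E_red by (metis (no_types, lifting) case_prod_conv image_eqI)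
  qed
qed auto

lemma card_Box: "card Box = card (carrier G)"
proof -
  have "card Box = p ^ \<gamma> * (p ^ \<gamma> * p ^ \<gamma>)"
    by (simp add: Box_def card_cartesian_product nat_power_eq)
  also have "\<dots> = p ^ (\<gamma> + (\<gamma> + \<gamma>))" by (simp add: power_add[symmetric])
  also have "\<gamma> + (\<gamma> + \<gamma>) = 3 * \<gamma>" by simp
  finally show ?thesis using card by simp
qed

lemma fin_Box: "finite Box" by (simp add: Box_def)

lemma inj_Box: "inj_on Ef Box"
  using fin_Box card_Box carrier_Box by (metis eq_card_imp_inj_on)

lemma E_one_iff: "E i j k = \<one> \<longleftrightarrow> NN dvd i \<and> NN dvd j \<and> NN dvd (k + RR * (i div NN))"
proof
  assume h: "E i j k = \<one>"
  let ?t = "(i mod NN, j mod NN, (k + RR * (i div NN)) mod NN)"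
  have t: "?t \<in> Box" using NN_pos by (simp add: Box_def)
  have z: "(0, 0, 0) \<in> Box" using NN_pos by (simp add: Box_def)
  have "Ef ?t = Ef (0, 0, 0)" using h E_red[of i j k] by simp
  then have "?t = (0, 0, 0)" using inj_onD[OF inj_Box _ t z] by blast
  then show "NN dvd i \<and> NN dvd j \<and> NN dvd (k + RR * (i div NN))" by (simp add: dvd_eq_mod_eq_0)
next
  assume "NN dvd i \<and> NN dvd j \<and> NN dvd (k + RR * (i div NN))"
  then show "E i j k = \<one>" using E_red[of i j k] by (simp add: dvd_eq_mod_eq_0)
qed

end



context pres begin

abbreviation "Hs d \<equiv> generate G {cm [^] (p ^ d :: nat)}"
abbreviation "Ks \<delta> \<equiv> generate G {a [^] (p ^ \<delta> :: nat), b [^] (p ^ \<delta> :: nat), cm}"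

lemma natpow: "x \<in> carrier G \<Longrightarrow> x [^] (p ^ n :: nat) = x [^] (int p ^ n)"
  by (simp only: int_pow_int[symmetric] of_nat_power)

lemma H_eq: "Hs d = {E 0 0 (int p ^ d * m) | m. True}"
proof -
  have "(cm [^] (p ^ d :: nat)) [^] (m::int) = E 0 0 (int p ^ d * m)" for m
    by (simp add: natpow int_pow_pow E_00k)
  then show ?thesis using generate_pow[of "cm [^] (p ^ d :: nat)"] by simp
qed

lemma E_eq_iff: "E i j k = E 0 0 t \<longleftrightarrow> E i j (k - t) = \<one>"
proof
  assume "E i j k = E 0 0 t"
  then have "E 0 0 (- t) \<otimes> E i j k = E 0 0 (- t) \<otimes> E 0 0 t" by simp
  then show "E i j (k - t) = \<one>" by (simp add: E_mult)
next
  assume "E i j (k - t) = \<one>"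
  then have "E 0 0 t \<otimes> E i j (k - t) = E 0 0 t" by simp
  then show "E i j k = E 0 0 t" by (simp add: E_mult)
qed

lemma E_in_H:
  assumes "d \<le> \<gamma>"
  shows "E i j k \<in> Hs d \<longleftrightarrow>
    int p ^ \<gamma> dvd i \<and> int p ^ \<gamma> dvd j \<and> int p ^ d dvd (k + int p ^ \<rho> * (i div int p ^ \<gamma>))"
proof -
  have DN: "int p ^ d dvd int p ^ \<gamma>" using assms by (simp add: le_imp_power_dvd)
  have "E i j k \<in> Hs d \<longleftrightarrow> (\<exists>m. E i j (k - int p ^ d * m) = \<one>)"
    unfolding H_eq using E_eq_iff by blast
  also have "\<dots> \<longleftrightarrow> (\<exists>m. int p ^ \<gamma> dvd i \<and> int p ^ \<gamma> dvd j \<and>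
      int p ^ \<gamma> dvd (k - int p ^ d * m + int p ^ \<rho> * (i div int p ^ \<gamma>)))"
    by (simp add: E_one_iff)
  also have "\<dots> \<longleftrightarrow> int p ^ \<gamma> dvd i \<and> int p ^ \<gamma> dvd j \<and> int p ^ d dvd (k + int p ^ \<rho> * (i div int p ^ \<gamma>))"
  proof safe
    fix m assume "int p ^ \<gamma> dvd k - int p ^ d * m + int p ^ \<rho> * (i div int p ^ \<gamma>)"
    then have "int p ^ d dvd k - int p ^ d * m + int p ^ \<rho> * (i div int p ^ \<gamma>)"
      using DN dvd_trans by blast
    then have "int p ^ d dvd (k - int p ^ d * m + int p ^ \<rho> * (i div int p ^ \<gamma>)) + int p ^ d * m"
      using dvd_add dvd_triv_left by blast
    then show "int p ^ d dvd k + int p ^ \<rho> * (i div int p ^ \<gamma>)" by (simp add: algebra_simps)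
  next
    assume "int p ^ d dvd k + int p ^ \<rho> * (i div int p ^ \<gamma>)" "int p ^ \<gamma> dvd i" "int p ^ \<gamma> dvd j"
    then obtain m where m: "k + int p ^ \<rho> * (i div int p ^ \<gamma>) = int p ^ d * m" by blast
    then have "k - int p ^ d * m + int p ^ \<rho> * (i div int p ^ \<gamma>) = 0" by simp
    then show "\<exists>m. int p ^ \<gamma> dvd i \<and> int p ^ \<gamma> dvd j \<and>
      int p ^ \<gamma> dvd k - int p ^ d * m + int p ^ \<rho> * (i div int p ^ \<gamma>)"
      using \<open>int p ^ \<gamma> dvd i\<close> \<open>int p ^ \<gamma> dvd j\<close> by (intro exI[of _ m]) simp
  qed
  finally show ?thesis .
qed

lemma H_central:
  assumes "h \<in> Hs d" "x \<in> carrier G"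
  shows "h \<otimes> x = x \<otimes> h"
proof -
  obtain m where h: "h = E 0 0 (int p ^ d * m)" using assms(1) H_eq by blast
  obtain i j k where x: "x = E i j k" using assms(2) gen_sub by blast
  show ?thesis unfolding h x by (simp add: E_mult add.commute)
qed

lemma H_sub: "subgroup (Hs d) G"
  by (rule generate_is_subgroup) simp

lemma H_normal: "Hs d \<lhd> G"
proof (rule normalI[OF H_sub], intro ballI)
  fix x assume x: "x \<in> carrier G"
  show "Hs d #> x = x <# Hs d"
    unfolding r_coset_def l_coset_def using H_central[OF _ x] by auto
qed

lemma K_eq: "Ks \<delta> = {E (int p ^ \<delta> * i) (int p ^ \<delta> * j) k | i j k. True}"
proof
  show "Ks \<delta> \<subseteq> {E (int p ^ \<delta> * i) (int p ^ \<delta> * j) k | i j k. True}"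
  proof
    fix g assume "g \<in> Ks \<delta>"
    then show "g \<in> {E (int p ^ \<delta> * i) (int p ^ \<delta> * j) k | i j k. True}"
    proof (induction rule: generate.induct)
      case one
      have "\<one> = E (int p ^ \<delta> * 0) (int p ^ \<delta> * 0) 0" by simp
      then show ?case by blast
    next
      case (incl h)
      then consider "h = a [^] (p ^ \<delta>)" | "h = b [^] (p ^ \<delta>)" | "h = cm" by blast
      then show ?case
      proof cases
        case 1
        then have "h = E (int p ^ \<delta> * 1) (int p ^ \<delta> * 0) 0"
          by (simp add: E_def natpow)
        then show ?thesis by blast
      next
        case 2
        then have "h = E (int p ^ \<delta> * 0) (int p ^ \<delta> * 1) 0"
          by (simp add: E_def natpow)
        then show ?thesis by blast
      next
        case 3
        then have "h = E (int p ^ \<delta> * 0) (int p ^ \<delta> * 0) 1" by (simp add: E_def)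
        then show ?thesis by blast
      qed
    next
      case (inv h)
      then consider "h = a [^] (p ^ \<delta>)" | "h = b [^] (p ^ \<delta>)" | "h = cm" by blast
      then show ?case
      proof cases
        case 1
        then have "inv h = E (int p ^ \<delta> * (-1)) (int p ^ \<delta> * 0) 0"
          by (simp add: E_def int_pow_neg natpow)
        then show ?thesis by blast
      next
        case 2
        then have "inv h = E (int p ^ \<delta> * 0) (int p ^ \<delta> * (-1)) 0"
          by (simp add: E_def int_pow_neg natpow)
        then show ?thesis by blast
      next
        case 3
        then have "inv h = E (int p ^ \<delta> * 0) (int p ^ \<delta> * 0) (-1)" by (simp add: E_def int_pow_neg)
        then show ?thesis by blast
      qed
    next
      case (eng h1 h2)
      then obtain i j k i' j' k' where "h1 = E (int p ^ \<delta> * i) (int p ^ \<delta> * j) k"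
        "h2 = E (int p ^ \<delta> * i') (int p ^ \<delta> * j') k'" by blast
      then have "h1 \<otimes> h2 = E (int p ^ \<delta> * (i + i')) (int p ^ \<delta> * (j + j'))
          (k + k' - int p ^ \<delta> * j * (int p ^ \<delta> * i'))"
        by (simp add: E_mult algebra_simps)
      then show ?case by blast
    qed
  qed
next
  show "{E (int p ^ \<delta> * i) (int p ^ \<delta> * j) k | i j k. True} \<subseteq> Ks \<delta>"
  proof clarify
    fix i j k
    have sg: "subgroup (Ks \<delta>) G" by (rule generate_is_subgroup) simp
    have A: "a [^] (p ^ \<delta>) \<in> Ks \<delta>" and B: "b [^] (p ^ \<delta>) \<in> Ks \<delta>" and C: "cm \<in> Ks \<delta>"
      by (auto intro: generate.incl)
    have "E (int p ^ \<delta> * i) (int p ^ \<delta> * j) k =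
        (a [^] (p ^ \<delta>)) [^] i \<otimes> (b [^] (p ^ \<delta>)) [^] j \<otimes> cm [^] k"
      unfolding E_def by (simp add: natpow int_pow_pow)
    also have "\<dots> \<in> Ks \<delta>"
      using subgroup_int_pow_closed[OF sg A] subgroup_int_pow_closed[OF sg B]
        subgroup_int_pow_closed[OF sg C] subgroup.m_closed[OF sg] by (intro subgroup.m_closed[OF sg] subgroup_int_pow_closed[OF sg] A B C)
    finally show "E (int p ^ \<delta> * i) (int p ^ \<delta> * j) k \<in> Ks \<delta>" .
  qed
qed

lemma K_sub: "subgroup (Ks \<delta>) G"
  by (rule generate_is_subgroup) simp

lemma H_le_K: "Hs d \<subseteq> Ks \<delta>"
proof
  fix h assume "h \<in> Hs d"
  then obtain m where "h = E 0 0 (int p ^ d * m)" unfolding H_eq by blast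
  then have "h = E (int p ^ \<delta> * 0) (int p ^ \<delta> * 0) (int p ^ d * m)" by simp
  then show "h \<in> Ks \<delta>" unfolding K_eq by blast
qed

abbreviation "Qg \<delta> d \<equiv> G\<lparr>carrier := Ks \<delta>\<rparr> Mod Hs d"

lemma Q_group: "group (Qg \<delta> d)"
  by (rule normal.factorgroup_is_group[OF normal_restrict_supergroup[OF K_sub H_normal H_le_K]])

lemma Q_carrier: "carrier (Qg \<delta> d) = {Hs d #> g | g. g \<in> Ks \<delta>}"
  by (auto simp: FactGroup_def RCOSETS_def r_coset_def)

lemma Q_mult: "U1 \<otimes>\<^bsub>Qg \<delta> d\<^esub> U2 = U1 <#> U2"
  by (simp add: FactGroup_def set_mult_def)

lemma Q_one: "\<one>\<^bsub>Qg \<delta> d\<^esub> = Hs d"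
  by (simp add: FactGroup_def)

lemma coset_mult: "g \<in> carrier G \<Longrightarrow> g' \<in> carrier G \<Longrightarrow>
   (Hs d #> g) \<otimes>\<^bsub>Qg \<delta> d\<^esub> (Hs d #> g') = Hs d #> (g \<otimes> g')"
  by (simp add: Q_mult normal.rcos_sum[OF H_normal])

lemma coset_shift:
  assumes "d \<le> \<gamma>" "i = i'" "j = j'" "int p ^ d dvd k - k'"
  shows "Hs d #> E i j k = Hs d #> E i' j' k'"
proof -
  obtain m where m: "k - k' = int p ^ d * m" using assms(4) by blast
  have h: "E 0 0 (k - k') \<in> Hs d" unfolding H_eq m by blast
  have "E i j k = E 0 0 (k - k') \<otimes> E i' j' k'" using assms by (simp add: E_mult)
  then have "Hs d #> E i j k = (Hs d #> E 0 0 (k - k')) #> E i' j' k'"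
    by (simp add: coset_mult_assoc subgroup.subset[OF H_sub])
  also have "Hs d #> E 0 0 (k - k') = Hs d" using h by (simp add: coset_join2 H_sub)
  finally show ?thesis .
qed

lemma coset_is_one: "g \<in> carrier G \<Longrightarrow> Hs d #> g = Hs d \<longleftrightarrow> g \<in> Hs d"
proof -
  assume g: "g \<in> carrier G"
  show ?thesis
  proof
    assume "Hs d #> g = Hs d" then show "g \<in> Hs d" by (rule coset_join1[OF _ g H_sub])
  next
    assume "g \<in> Hs d" then show "Hs d #> g = Hs d" by (rule coset_join2[OF g H_sub])
  qed
qed

end



context pres begin

lemma caseI:
  assumes h: "\<rho> \<le> d" "d \<le> \<delta>" "\<delta> \<le> \<gamma>" "\<rho> < \<gamma> - \<delta>"
  shows "Qg \<delta> d \<cong> cyc (p ^ (\<gamma> - \<delta> + d - \<rho>)) \<times>\<times> (cyc (p ^ (\<gamma> - \<delta>)) \<times>\<times> cyc (p ^ \<rho>))"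
proof -
  define P where "P = int p ^ \<delta>"
  define e where "e = int p ^ (\<gamma> - \<delta> - \<rho>)"
  define \<phi> where "\<phi> u v w = Hs d #> E (P * (u + e * w)) (P * v) (- w)" for u v w
  have dg: "d \<le> \<gamma>" using h by simp
  have DP: "int p ^ d dvd P" using h by (simp add: P_def le_imp_power_dvd)
  show ?thesis
  proof (rule iso_from_Z3[OF Q_group, where \<phi>=\<phi>])
    show "p ^ (\<gamma> - \<delta> + d - \<rho>) > 0" "p ^ (\<gamma> - \<delta>) > 0" "p ^ \<rho> > 0" using p_pos by auto
  next
    fix u v w
    have "E (P * (u + e * w)) (P * v) (- w) \<in> Ks \<delta>" unfolding K_eq P_def by blast
    then show "\<phi> u v w \<in> carrier (Qg \<delta> d)" unfolding Q_carrier \<phi>_def by blast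
  next
    fix u v w u' v' w'
    have "\<phi> u v w \<otimes>\<^bsub>Qg \<delta> d\<^esub> \<phi> u' v' w' =
        Hs d #> (E (P * (u + e * w)) (P * v) (- w) \<otimes> E (P * (u' + e * w')) (P * v') (- w'))"
      unfolding \<phi>_def by (intro coset_mult E_c)
    also have "\<dots> = Hs d #> E (P * (u + e * w) + P * (u' + e * w')) (P * v + P * v')
         (- w + - w' - P * v * (P * (u' + e * w')))"
      by (simp add: E_mult)
    also have "\<dots> = \<phi> (u + u') (v + v') (w + w')"
      unfolding \<phi>_def by (rule coset_shift[OF dg]) (auto simp: algebra_simps DP)
    finally show "\<phi> (u + u') (v + v') (w + w') = \<phi> u v w \<otimes>\<^bsub>Qg \<delta> d\<^esub> \<phi> u' v' w'" by simp
  next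
    fix u v w
    have "\<phi> u v w = \<one>\<^bsub>Qg \<delta> d\<^esub> \<longleftrightarrow> E (P * (u + e * w)) (P * v) (- w) \<in> Hs d"
      unfolding \<phi>_def Q_one by (simp add: coset_is_one)
    also have "\<dots> \<longleftrightarrow> int p ^ \<gamma> dvd P * (u + e * w) \<and> int p ^ \<gamma> dvd P * v \<and>
        int p ^ d dvd (- w + int p ^ \<rho> * ((P * (u + e * w)) div int p ^ \<gamma>))"
      by (rule E_in_H[OF dg])
    also have "\<dots> \<longleftrightarrow> (int p ^ (\<gamma> - \<delta> + d - \<rho>) dvd u \<and> int p ^ (\<gamma> - \<delta>) dvd v \<and> int p ^ \<rho> dvd w)"
      unfolding P_def e_def by (rule arithI) (use h p_pos in auto)
    finally show "\<phi> u v w = \<one>\<^bsub>Qg \<delta> d\<^esub> \<longleftrightarrow> int (p ^ (\<gamma> - \<delta> + d - \<rho>)) dvd u \<and>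
        int (p ^ (\<gamma> - \<delta>)) dvd v \<and> int (p ^ \<rho>) dvd w" by simp
  next
    show "carrier (Qg \<delta> d) \<subseteq> {\<phi> u v w | u v w. True}"
    proof
      fix q assume "q \<in> carrier (Qg \<delta> d)"
      then obtain g where g: "g \<in> Ks \<delta>" "q = Hs d #> g" unfolding Q_carrier by blast
      then obtain i j k where q: "q = Hs d #> E (P * i) (P * j) k"
        unfolding K_eq P_def by blast
      have "q = \<phi> (i + e * k) j (- k)"
        unfolding q \<phi>_def by (rule coset_shift[OF dg]) (auto simp: algebra_simps)
      then show "q \<in> {\<phi> u v w | u v w. True}" by blast
    qed
  qed
qed

lemma caseII:
  assumes h: "d \<le> \<delta>" "\<delta> \<le> \<gamma>" "d \<le> \<rho> \<or> \<gamma> - \<delta> \<le> \<rho>"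
  shows "Qg \<delta> d \<cong> cyc (p ^ (\<gamma> - \<delta>)) \<times>\<times> (cyc (p ^ (\<gamma> - \<delta>)) \<times>\<times> cyc (p ^ d))"
proof -
  define P where "P = int p ^ \<delta>"
  define f where "f = (if \<gamma> - \<delta> \<le> \<rho> then int p ^ (\<rho> - (\<gamma> - \<delta>)) else 0)"
  define \<phi> where "\<phi> u v w = Hs d #> E (P * u) (P * v) (w - f * u)" for u v w
  have dg: "d \<le> \<gamma>" using h by simp
  have DP: "int p ^ d dvd P" using h by (simp add: P_def le_imp_power_dvd)
  show ?thesis
  proof (rule iso_from_Z3[OF Q_group, where \<phi>=\<phi>])
    show "p ^ (\<gamma> - \<delta>) > 0" "p ^ (\<gamma> - \<delta>) > 0" "p ^ d > 0" using p_pos by auto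
  next
    fix u v w
    have "E (P * u) (P * v) (w - f * u) \<in> Ks \<delta>" unfolding K_eq P_def by blast
    then show "\<phi> u v w \<in> carrier (Qg \<delta> d)" unfolding Q_carrier \<phi>_def by blast
  next
    fix u v w u' v' w'
    have "\<phi> u v w \<otimes>\<^bsub>Qg \<delta> d\<^esub> \<phi> u' v' w' =
        Hs d #> (E (P * u) (P * v) (w - f * u) \<otimes> E (P * u') (P * v') (w' - f * u'))"
      unfolding \<phi>_def by (intro coset_mult E_c)
    also have "\<dots> = Hs d #> E (P * u + P * u') (P * v + P * v')
         (w - f * u + (w' - f * u') - P * v * (P * u'))"
      by (simp add: E_mult)
    also have "\<dots> = \<phi> (u + u') (v + v') (w + w')"
      unfolding \<phi>_def by (rule coset_shift[OF dg]) (auto simp: algebra_simps DP)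
    finally show "\<phi> (u + u') (v + v') (w + w') = \<phi> u v w \<otimes>\<^bsub>Qg \<delta> d\<^esub> \<phi> u' v' w'" by simp
  next
    fix u v w
    have "\<phi> u v w = \<one>\<^bsub>Qg \<delta> d\<^esub> \<longleftrightarrow> E (P * u) (P * v) (w - f * u) \<in> Hs d"
      unfolding \<phi>_def Q_one by (simp add: coset_is_one)
    also have "\<dots> \<longleftrightarrow> int p ^ \<gamma> dvd P * u \<and> int p ^ \<gamma> dvd P * v \<and>
        int p ^ d dvd (w - f * u + int p ^ \<rho> * ((P * u) div int p ^ \<gamma>))"
      by (rule E_in_H[OF dg])
    also have "\<dots> \<longleftrightarrow> (int p ^ (\<gamma> - \<delta>) dvd u \<and> int p ^ (\<gamma> - \<delta>) dvd v \<and> int p ^ d dvd w)"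
      unfolding P_def f_def by (rule arithII) (use h p_pos in auto)
    finally show "\<phi> u v w = \<one>\<^bsub>Qg \<delta> d\<^esub> \<longleftrightarrow> int (p ^ (\<gamma> - \<delta>)) dvd u \<and>
        int (p ^ (\<gamma> - \<delta>)) dvd v \<and> int (p ^ d) dvd w" by simp
  next
    show "carrier (Qg \<delta> d) \<subseteq> {\<phi> u v w | u v w. True}"
    proof
      fix q assume "q \<in> carrier (Qg \<delta> d)"
      then obtain g where g: "g \<in> Ks \<delta>" "q = Hs d #> g" unfolding Q_carrier by blast
      then obtain i j k where q: "q = Hs d #> E (P * i) (P * j) k"
        unfolding K_eq P_def by blast
      have "q = \<phi> i j (k + f * i)"
        unfolding q \<phi>_def by (rule coset_shift[OF dg]) (auto simp: algebra_simps)
      then show "q \<in> {\<phi> u v w | u v w. True}" by blast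
    qed
  qed
qed

end



theorem lemma4p4:
  fixes G :: "('a, 'b) monoid_scheme" and p \<gamma> \<rho> \<delta> :: nat and a b :: 'a
  assumes "Factorial_Ring.prime p" and "odd p"
    and "1 \<le> \<gamma>" and "\<rho> \<le> \<gamma>"
    and "presented_G G p \<gamma> \<rho> a b"
    and "1 \<le> \<delta>" and "\<delta> \<le> \<gamma>"
  defines "c \<equiv> commutator G a b"
  defines "K \<equiv> generate G {a [^]\<^bsub>G\<^esub> (p ^ \<delta>), b [^]\<^bsub>G\<^esub> (p ^ \<delta>), c}"
  shows
    "(G\<lparr>carrier := K\<rparr>) Mod (generate G {c [^]\<^bsub>G\<^esub> (p ^ \<delta>)}) \<cong>
       (if \<rho> < \<delta> \<and> \<delta> < \<gamma> - \<rho>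
        then cyc (p ^ (\<gamma> - \<rho>)) \<times>\<times> (cyc (p ^ (\<gamma> - \<delta>)) \<times>\<times> cyc (p ^ \<rho>))
        else cyc (p ^ (\<gamma> - \<delta>)) \<times>\<times> (cyc (p ^ (\<gamma> - \<delta>)) \<times>\<times> cyc (p ^ \<delta>)))
   \<and> (G\<lparr>carrier := K\<rparr>) Mod (generate G {c [^]\<^bsub>G\<^esub> (p ^ (\<delta> - 1))}) \<cong>
       (if \<rho> < \<delta> \<and> \<delta> < \<gamma> - \<rho>
        then cyc (p ^ (\<gamma> - \<rho> - 1)) \<times>\<times> (cyc (p ^ (\<gamma> - \<delta>)) \<times>\<times> cyc (p ^ \<rho>))
        else cyc (p ^ (\<gamma> - \<delta>)) \<times>\<times> (cyc (p ^ (\<gamma> - \<delta>)) \<times>\<times> cyc (p ^ (\<delta> - 1))))"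
proof -
  have grp: "group G" using assms(5) by (simp add: presented_G_def)
  interpret P: pres G p \<gamma> \<rho> a b
    by (rule pres.intro[OF grp]) (unfold_locales; use assms in auto)
  have part1: "(G\<lparr>carrier := K\<rparr>) Mod (generate G {c [^]\<^bsub>G\<^esub> (p ^ \<delta>)}) \<cong>
       (if \<rho> < \<delta> \<and> \<delta> < \<gamma> - \<rho>
        then cyc (p ^ (\<gamma> - \<rho>)) \<times>\<times> (cyc (p ^ (\<gamma> - \<delta>)) \<times>\<times> cyc (p ^ \<rho>))
        else cyc (p ^ (\<gamma> - \<delta>)) \<times>\<times> (cyc (p ^ (\<gamma> - \<delta>)) \<times>\<times> cyc (p ^ \<delta>)))"
  proof (cases "\<rho> < \<delta> \<and> \<delta> < \<gamma> - \<rho>")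
    case True
    have e: "\<gamma> - \<delta> + \<delta> - \<rho> = \<gamma> - \<rho>" using assms by simp
    have "P.Qg \<delta> \<delta> \<cong> cyc (p ^ (\<gamma> - \<delta> + \<delta> - \<rho>)) \<times>\<times> (cyc (p ^ (\<gamma> - \<delta>)) \<times>\<times> cyc (p ^ \<rho>))"
      by (rule P.caseI) (use True assms in auto)
    then show ?thesis unfolding e c_def K_def if_P[OF True] .
  next
    case False
    have "P.Qg \<delta> \<delta> \<cong> cyc (p ^ (\<gamma> - \<delta>)) \<times>\<times> (cyc (p ^ (\<gamma> - \<delta>)) \<times>\<times> cyc (p ^ \<delta>))"
      by (rule P.caseII) (use False assms in auto)
    then show ?thesis unfolding c_def K_def if_not_P[OF False] .
  qed
  have part2: "(G\<lparr>carrier := K\<rparr>) Mod (generate G {c [^]\<^bsub>G\<^esub> (p ^ (\<delta> - 1))}) \<cong>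
       (if \<rho> < \<delta> \<and> \<delta> < \<gamma> - \<rho>
        then cyc (p ^ (\<gamma> - \<rho> - 1)) \<times>\<times> (cyc (p ^ (\<gamma> - \<delta>)) \<times>\<times> cyc (p ^ \<rho>))
        else cyc (p ^ (\<gamma> - \<delta>)) \<times>\<times> (cyc (p ^ (\<gamma> - \<delta>)) \<times>\<times> cyc (p ^ (\<delta> - 1))))"
  proof (cases "\<rho> < \<delta> \<and> \<delta> < \<gamma> - \<rho>")
    case True
    have e: "\<gamma> - \<delta> + (\<delta> - 1) - \<rho> = \<gamma> - \<rho> - 1" using assms True by simp
    have "P.Qg \<delta> (\<delta> - 1) \<cong> cyc (p ^ (\<gamma> - \<delta> + (\<delta> - 1) - \<rho>)) \<times>\<times> (cyc (p ^ (\<gamma> - \<delta>)) \<times>\<times> cyc (p ^ \<rho>))"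
      by (rule P.caseI) (use True assms in auto)
    then show ?thesis unfolding e c_def K_def if_P[OF True] .
  next
    case False
    have "P.Qg \<delta> (\<delta> - 1) \<cong> cyc (p ^ (\<gamma> - \<delta>)) \<times>\<times> (cyc (p ^ (\<gamma> - \<delta>)) \<times>\<times> cyc (p ^ (\<delta> - 1)))"
      by (rule P.caseII) (use False assms in auto)
    then show ?thesis unfolding c_def K_def if_not_P[OF False] .
  qed
  show ?thesis using part1 part2 by blast
qed



end
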